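(* Let $a,b$ be distinct real numbers, let $x_0\in\mathbb{R}$, and set $\lambda_n:=\frac{2n+3}{n+2}$ for all $n\in\mathbb{N}$ (so $\lambda_n\to2$ and $\sum_n(2-\lambda_n)=+\infty$). Define $(x_n)_{n\in\mathbb{N}}$ by \[ x_{2n+1}:=(1-\lambda_{2n})x_{2n}+\lambda_{2n}a,\qquad x_{2n+2}:=(1-\lambda_{2n+1})x_{2n+1}+\lambda_{2n+1}b . \] Then $x_{2n}\to \operatorname{sign}(b-a)\,\infty$ and $x_{2n+1}\to\operatorname{sign}(a-b)\,\infty$. *)

theory Defs
  imports "HOL-Analysis.Analysis"
begin

definition lam :: "nat \<Rightarrow> real" where
  "lam n = (2 * real n + 3) / (real n + 2)"

fun xseq :: "real \<Rightarrow> real \<Rightarrow> real \<Rightarrow> nat \<Rightarrow> real" where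
  "xseq a b x0 0 = x0"
| "xseq a b x0 (Suc n) =
     (1 - lam n) * xseq a b x0 n + lam n * (if even n then a else b)"

end

theory Submission
  imports Defs
begin


lemma lam1: "1 - lam n = - (real n + 1)/(real n + 2)"
  by (simp add: lam_def field_simps)

lemma step1: "xseq a b x0 (Suc n) - (if even n then a else b) = - (real n + 1)/(real n + 2) * (xseq a b x0 n - (if even n then a else b))"
proof -
  have "xseq a b x0 (Suc n) - (if even n then a else b) = (1 - lam n) * (xseq a b x0 n - (if even n then a else b))"
    by (simp add: algebra_simps)
  then show ?thesis by (simp only: lam1)
qed

lemma stepm: "(real n+2)*xseq a b x0 (Suc n) = -((real n+1)*xseq a b x0 n) + (2*real n+3)*(if even n then a else b)"
proof -
  have d: "real n + 2 \<noteq> 0" by simp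
  have "(real n+2)*xseq a b x0 (Suc n) = (real n+2)*(1 - lam n) * xseq a b x0 n + (real n+2)*lam n * (if even n then a else b)"
    by (simp add: algebra_simps)
  also have "(real n+2)*(1 - lam n) = -(real n+1)" using d by (simp add: lam_def field_simps)
  also have "(real n+2)*lam n = 2*real n+3" using d by (simp add: lam_def field_simps)
  finally show ?thesis by (simp add: algebra_simps)
qed

lemma closedY: "(2*real k+1)*xseq a b x0 (2*k) = x0 + (b-a)*(2*real k^2+real k) + 2*b*real k"
proof (induction k)
  case 0 then show ?case by simp
next
  case (Suc k)
  have e: "2 * Suc k = Suc (Suc (2*k))" by simp
  have s1: "(2*real k+2)*xseq a b x0 (Suc (2*k)) = -((2*real k+1)*xseq a b x0 (2*k)) + (4*real k+3)*a"
    using stepm[of "2*k" a b x0] by (simp del: xseq.simps add: algebra_simps)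
  have s2: "(2*real k+3)*xseq a b x0 (2 * Suc k) = -((2*real k+2)*xseq a b x0 (Suc (2*k))) + (4*real k+5)*b"
    using stepm[of "Suc (2*k)" a b x0] unfolding e by (simp del: xseq.simps add: algebra_simps)
  have "(2*real (Suc k)+1)*xseq a b x0 (2*Suc k) = (2*real k+3)*xseq a b x0 (2 * Suc k)" by (simp add: algebra_simps)
  also have "... = (2*real k+1)*xseq a b x0 (2*k) - (4*real k+3)*a + (4*real k+5)*b" using s1 s2 by linarith
  also have "... = x0 + (b-a)*(2*real (Suc k)^2+real (Suc k)) + 2*b*real (Suc k)"
    unfolding Suc.IH by (simp add: algebra_simps power2_eq_square)
  finally show ?case .
qed

lemma closed: "xseq a b x0 (2*k) = (b-a)*real k + (x0 + 2*b*real k)/(2*real k+1)"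
proof -
  have d: "2*real k+1 \<noteq> 0" by (smt (verit) of_nat_0_le_iff)
  have "xseq a b x0 (2*k) = (x0 + (b-a)*(2*real k^2+real k) + 2*b*real k) / (2*real k+1)"
    using closedY[of k a b x0] d by (simp add: eq_divide_eq mult.commute del: xseq.simps)
  also have "... = (b-a)*real k + (x0 + 2*b*real k)/(2*real k+1)"
    using d by (simp add: field_simps power2_eq_square)
  finally show ?thesis .
qed

lemma neg: "xseq (-a) (-b) (-x0) n = - xseq a b x0 n"
  by (induction n) (auto simp: algebra_simps)

lemma bnd: "\<bar>(x0 + 2*b*real k)/(2*real k+1)\<bar> \<le> \<bar>x0\<bar> + \<bar>b\<bar>"
proof -
  have k: "real k \<ge> 0" by simp
  have "\<bar>x0 + 2*b*real k\<bar> \<le> \<bar>x0\<bar> + \<bar>2*b*real k\<bar>" by (rule abs_triangle_ineq)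
  also have "\<bar>2*b*real k\<bar> = 2*\<bar>b\<bar>*real k" by (simp add: abs_mult)
  also have "\<bar>x0\<bar> + 2*\<bar>b\<bar>*real k \<le> (\<bar>x0\<bar> + \<bar>b\<bar>) * (2*real k+1)"
    using k by (simp add: algebra_simps mult_nonneg_nonneg)
  finally have "\<bar>x0 + 2*b*real k\<bar> \<le> (\<bar>x0\<bar> + \<bar>b\<bar>) * (2*real k+1)" .
  moreover have "\<bar>2*real k+1\<bar> = 2*real k+1" by simp
  ultimately show ?thesis by (simp add: abs_divide divide_le_eq)
qed

lemma mainpos:
  fixes a b x0 :: real assumes "a < b"
  shows "filterlim (\<lambda>n. xseq a b x0 (2*n)) at_top sequentially \<and>
            filterlim (\<lambda>n. xseq a b x0 (2*n+1)) at_bot sequentially"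
proof -
  define C where "C = \<bar>x0\<bar> + \<bar>b\<bar>"
  have lb: "xseq a b x0 (2*k) \<ge> (b-a)*real k - C" for k
    using bnd[of x0 b k] unfolding closed C_def by linarith
  have lin: "filterlim (\<lambda>k. (b-a)*real k - C) at_top sequentially"
  proof -
    have "filterlim (\<lambda>k. (b-a)*real k) at_top sequentially"
      using assms by (intro filterlim_tendsto_pos_mult_at_top[OF tendsto_const] filterlim_real_sequentially) auto
    then show ?thesis using filterlim_tendsto_add_at_top[OF tendsto_const[of "-C"]] by simp
  qed
  have A: "filterlim (\<lambda>n. xseq a b x0 (2*n)) at_top sequentially"
    by (rule filterlim_at_top_mono[OF lin]) (use lb in auto)
  have st: "xseq a b x0 (2*k+1) = - (real (2*k)+1)/(real (2*k)+2) * (xseq a b x0 (2*k) - a) + a" for k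
  proof -
    have h: "xseq a b x0 (Suc (2*k)) - a = - (real (2*k)+1)/(real (2*k)+2) * (xseq a b x0 (2*k) - a)"
      using step1[of a b x0 "2*k"] by (simp del: xseq.simps)
    then show ?thesis unfolding Suc_eq_plus1 by linarith
  qed
  have B1: "filterlim (\<lambda>n. -a + xseq a b x0 (2*n)) at_top sequentially"
    by (rule filterlim_tendsto_add_at_top[OF tendsto_const A])
  have B2: "filterlim (\<lambda>n. 1/2 * (-a + xseq a b x0 (2*n))) at_top sequentially"
    by (rule filterlim_tendsto_pos_mult_at_top[OF tendsto_const _ B1]) simp
  have B: "filterlim (\<lambda>n. -a + 1/2 * (-a + xseq a b x0 (2*n))) at_top sequentially"
    by (rule filterlim_tendsto_add_at_top[OF tendsto_const B2])
  have ev: "eventually (\<lambda>n. xseq a b x0 (2*n) - a \<ge> 0) sequentially"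
  proof -
    have "eventually (\<lambda>n. a \<le> xseq a b x0 (2*n)) sequentially"
      using A unfolding filterlim_at_top by blast
    then show ?thesis by (rule eventually_mono) simp
  qed
  have "filterlim (\<lambda>n. - xseq a b x0 (2*n+1)) at_top sequentially"
  proof (rule filterlim_at_top_mono[OF B])
    show "\<forall>\<^sub>F n in sequentially. -a + 1/2 * (-a + xseq a b x0 (2*n)) \<le> - xseq a b x0 (2 * n + 1)"
      using ev
    proof eventually_elim
      case (elim n)
      have "(real (2*n)+1)/(real (2*n)+2) \<ge> 1/2" by (simp add: field_simps)
      then have "(real (2*n)+1)/(real (2*n)+2) * (xseq a b x0 (2*n) - a) \<ge> 1/2 * (xseq a b x0 (2*n) - a)"
        using elim by (intro mult_right_mono) auto
      moreover have "1/2 * (-a + xseq a b x0 (2*n)) = 1/2 * (xseq a b x0 (2*n) - a)" by simp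
      ultimately show ?case unfolding st by (simp only: minus_divide_left[symmetric] mult_minus_left)
    qed
  qed
  then have "filterlim (\<lambda>n. xseq a b x0 (2*n+1)) at_bot sequentially"
    by (simp only: filterlim_uminus_at_bot)
  with A show ?thesis by blast
qed

theorem mainTheorem5:
  fixes a b x0 :: real
  assumes "a \<noteq> b"
  shows "(a < b \<longrightarrow>
            filterlim (\<lambda>n. xseq a b x0 (2*n)) at_top sequentially \<and>
            filterlim (\<lambda>n. xseq a b x0 (2*n+1)) at_bot sequentially) \<and>
         (b < a \<longrightarrow>
            filterlim (\<lambda>n. xseq a b x0 (2*n)) at_bot sequentially \<and>
            filterlim (\<lambda>n. xseq a b x0 (2*n+1)) at_top sequentially)"
proof (intro conjI impI)
  assume "a < b" then show "filterlim (\<lambda>n. xseq a b x0 (2*n)) at_top sequentially"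
    "filterlim (\<lambda>n. xseq a b x0 (2*n+1)) at_bot sequentially" using mainpos by blast+
next
  assume "b < a"
  then have "-a < -b" by simp
  from mainpos[OF this, of "-x0"] have h:
    "filterlim (\<lambda>n. - xseq a b x0 (2*n)) at_top sequentially"
    "filterlim (\<lambda>n. - xseq a b x0 (2*n+1)) at_bot sequentially" by (simp_all add: neg)
  show "filterlim (\<lambda>n. xseq a b x0 (2*n)) at_bot sequentially"
    using h(1) by (simp only: filterlim_uminus_at_bot)
  show "filterlim (\<lambda>n. xseq a b x0 (2*n+1)) at_top sequentially"
    using h(2) by (simp only: filterlim_uminus_at_top)
qed
end
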